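(* Let $h\in H$ and let $P^+_h(\mathbf t_{\mathcal N})=\sum_{\beta\in\mathcal B_h}p_\beta\mathbf t_{\mathcal N}^\beta$ be the quotient in the decomposition $f_h=P^+_h+f^{neg}_h$ (with $P^+_h$ a finite sum of monomials with exponents $\beta\not<0$ and $f^{neg}_h$ of negative degree in every $t_n$). Then the polynomial part satisfies $$P_h(\mathbf t_{\mathcal N})=\sum_{\beta\in\mathcal B_h}\mathfrak s(\beta)\,p_\beta\,\mathbf t_{\mathcal N}^{\beta}.$$
   Context: Let $\Gamma$ be a connected plumbing graph which is a tree, all of whose vertices have genus $0$ and an integer decoration $e_v$, such that the intersection matrix $I$ ($I_{vv}=e_v$, $I_{vw}=1$ if $v,w$ are adjacent, $0$ otherwise) is negative definite. Let $\mathcal V$ be its vertex set, $\delta_v$ the valency of $v$, and $\mathcal N=\{v:\delta_v\ge 3\}$ the set of nodes (assumed nonempty). Let $L=\bigoplus_v\mathbb Z E_v$ with the form given by $I$, $L'=\{l'\in L\otimes\mathbb Q:(l',E_v)\in\mathbb Z\ \forall v\}$ with basis $E_v^*$ defined by $(E_v^*,E_w)=-\delta_{vw}$, $H=L'/L$ and $[l']$ the class of $l'$. For $l'=\sum l_vE_v\in L\otimes\mathbb Q$ put $\mathbf t^{l'}=\prod_v t_v^{l_v}$. The zeta-function is $f(\mathbf t)=\prod_{v}(1-\mathbf t^{E_v^*})^{\delta_v-2}$; let $Z(\mathbf t)=\sum_{l'\in L'}p_{l'}\mathbf t^{l'}$ be its Taylor expansion at the origin, $Z_h=\sum_{[l']=h}p_{l'}\mathbf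 t^{l'}$, and $f_h(\mathbf t)$ the rational function whose expansion is $Z_h$. Let $\pi_{\mathcal N}$ be the projection of $L\otimes\mathbb Q$ onto $\bigoplus_{n\in\mathcal N}\mathbb QE_n$ forgetting non-node coordinates, and $\mathbf t_{\mathcal N}^x:=\prod_{n\in\mathcal N}t_n^{x_n}$ with $x_n$ the coordinates of $\pi_{\mathcal N}(x)$. The reduced zeta-function is $f_h(\mathbf t_{\mathcal N}):=f_h(\mathbf t)|_{t_v=1,\,v\notin\mathcal N}$; it can be written as $\mathbf t_{\mathcal N}^{r_h}\sum_\ell b_\ell\mathbf t_{\mathcal N}^{\ell}/A(\mathbf t_{\mathcal N})$, $A=\prod_{n\in\mathcal N}(1-\mathbf t_{\mathcal N}^{a_n})$, $a_n=\lambda_n\pi_{\mathcal N}(E_n^* )$, $\lambda_n>0$ (all coordinates of $a_n$ positive). A rational function $R/A$ ($R$ a finite sum of monomials with rational exponents) has negative degree in $t_n$ if every monomial of $R$ has $t_n$-exponent smaller than the $t_n$-exponent of $\mathbf t_{\mathcal N}^{\sum a_{n'}}$. For $\beta=\sum_{n\in\mathcal N}\beta_nE_n$, $\beta<0$ means all $\beta_n<0$. Orbifold graph $\Gamma^{orb}$: vertex set $\mathcal N$, with $n,n'$ joined by an edge iff the path in $\Gamma$ between them has all interior vertices of valency $2$; $\delta_{n,\mathcal N}$ denotes the valency of $n$ in $\Gamma^{orb}$ (a tree). For $n\in\mathcal N$, $P^n_h$ is the unique finite sum of monomials in $\mathbf t_{\mathcal N}$, each with $t_n$-exponent $\ge0$,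 such that $f_h-P^n_h$ (written over $A$) has negative degree in $t_n$ (one-variable polynomial part in $t_n$, other variables as coefficients). For an edge $nn'$ of $\Gamma^{orb}$, $P^{n,n'}_h$ is the unique finite sum of monomials each having $t_n$-exponent $\ge0$ or $t_{n'}$-exponent $\ge0$, such that $f_h-P^{n,n'}_h$ has negative degree in both $t_n$ and $t_{n'}$. The polynomial part is $P_h=\sum_{\text{edges } nn' \text{ of }\Gamma^{orb}}P^{n,n'}_h-\sum_{n\in\mathcal N}(\delta_{n,\mathcal N}-1)P^n_h$. Multiplicity: choose $n_0\in\mathcal N$, orient the edges of $\Gamma^{orb}$ towards $n_0$, and write $n>n'$ if there is an edge oriented from $n$ to $n'$. For $\beta$, let $\mathfrak s_n(\beta)=1$ if $\beta_n\ge0$ and $0$ otherwise; for $n>n'$ let $\mathfrak s_{n>n'}(\beta)=1$ if $\beta_n\ge0$ and $\beta_{n'}<0$, and $0$ otherwise. Set $\mathfrak s(\beta)=\mathfrak s_{n_0}(\beta)+\sum_{n>n'}\mathfrak s_{n>n'}(\beta)$ (this does not depend on $n_0$). *)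

theory Defs
  imports Complex_Main
begin

text \<open>The graph is given by a symmetric irreflexive adjacency relation adj on the
finite type 'v of vertices; e v is the Euler decoration of v (all genera are 0).\<close>

definition valency :: "('v::finite \<Rightarrow> 'v \<Rightarrow> bool) \<Rightarrow> 'v \<Rightarrow> nat" where
  "valency adj v = card {w. adj v w}"

definition graph_edges :: "('v \<Rightarrow> 'v \<Rightarrow> bool) \<Rightarrow> 'v set set" where
  "graph_edges adj = {{u, w} | u w. adj u w}"

definition is_tree :: "('v::finite \<Rightarrow> 'v \<Rightarrow> bool) \<Rightarrow> bool" where
  "is_tree adj \<longleftrightarrow> (\<forall>u w. adj u w \<longrightarrow> adj w u) \<and> (\<forall>u. \<not> adj u u)
     \<and> (\<forall>u w. adj\<^sup>*\<^sup>* u w) \<and> card (graph_edges adj) + 1 = card (UNIV :: 'v set)"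

definition inter_mat :: "('v \<Rightarrow> 'v \<Rightarrow> bool) \<Rightarrow> ('v \<Rightarrow> int) \<Rightarrow> 'v \<Rightarrow> 'v \<Rightarrow> int" where
  "inter_mat adj e v w = (if v = w then e v else if adj v w then 1 else 0)"

definition neg_definite :: "('v::finite \<Rightarrow> 'v \<Rightarrow> int) \<Rightarrow> bool" where
  "neg_definite I \<longleftrightarrow> (\<forall>x :: 'v \<Rightarrow> real. (\<exists>v. x v \<noteq> 0) \<longrightarrow>
      (\<Sum>v\<in>UNIV. \<Sum>w\<in>UNIV. x v * of_int (I v w) * x w) < 0)"

text \<open>Elements of L \<otimes> Q are functions 'v \<Rightarrow> rat (coordinates w.r.t. the E_v).
The form (l, E_w).\<close>
definition form_E :: "('v::finite \<Rightarrow> 'v \<Rightarrow> int) \<Rightarrow> ('v \<Rightarrow> rat) \<Rightarrow> 'v \<Rightarrow> rat" where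
  "form_E I l w = (\<Sum>u\<in>UNIV. l u * of_int (I u w))"

definition Estar :: "('v::finite \<Rightarrow> 'v \<Rightarrow> int) \<Rightarrow> 'v \<Rightarrow> ('v \<Rightarrow> rat)" where
  "Estar I v = (THE x. \<forall>w. form_E I x w = (if v = w then -1 else 0))"

definition in_Ldual :: "('v::finite \<Rightarrow> 'v \<Rightarrow> int) \<Rightarrow> ('v \<Rightarrow> rat) \<Rightarrow> bool" where
  "in_Ldual I l \<longleftrightarrow> (\<forall>w. form_E I l w \<in> \<int>)"

definition in_L :: "('v \<Rightarrow> rat) \<Rightarrow> bool" where
  "in_L l \<longleftrightarrow> (\<forall>v. l v \<in> \<int>)"

text \<open>[l] = [h0] in H = L'/L.\<close>
definition same_class :: "('v \<Rightarrow> rat) \<Rightarrow> ('v \<Rightarrow> rat) \<Rightarrow> bool" where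
  "same_class l h0 \<longleftrightarrow> in_L (\<lambda>v. l v - h0 v)"

text \<open>Coefficient of x^k in the Taylor expansion of (1 - x)^(delta - 2).\<close>
definition zfac_coeff :: "nat \<Rightarrow> nat \<Rightarrow> int" where
  "zfac_coeff \<delta> k =
     (if \<delta> \<ge> 2 then (-1) ^ k * int ((\<delta> - 2) choose k)
      else if \<delta> = 1 then 1 else int k + 1)"

definition lin_comb :: "('v::finite \<Rightarrow> 'v \<Rightarrow> int) \<Rightarrow> ('v \<Rightarrow> nat) \<Rightarrow> ('v \<Rightarrow> rat)" where
  "lin_comb I k = (\<lambda>u. \<Sum>v\<in>UNIV. of_nat (k v) * Estar I v u)"

text \<open>p_{l'}: coefficient of t^{l'} in the expansion of
  f(t) = prod_v (1 - t^{E_v^*})^(delta_v - 2).\<close>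
definition zeta_coeff :: "('v::finite \<Rightarrow> 'v \<Rightarrow> bool) \<Rightarrow> ('v \<Rightarrow> int) \<Rightarrow> ('v \<Rightarrow> rat) \<Rightarrow> int" where
  "zeta_coeff adj e l =
     (\<Sum>k\<in>{k. lin_comb (inter_mat adj e) k = l}. \<Prod>v\<in>UNIV. zfac_coeff (valency adj v) (k v))"

definition nodes :: "('v::finite \<Rightarrow> 'v \<Rightarrow> bool) \<Rightarrow> 'v set" where
  "nodes adj = {v. valency adj v \<ge> 3}"

definition proj_N :: "'v set \<Rightarrow> ('v \<Rightarrow> rat) \<Rightarrow> ('v \<Rightarrow> rat)" where
  "proj_N N x = (\<lambda>v. if v \<in> N then x v else 0)"

text \<open>Coefficient of t_N^x in the reduced series Z_h(t)|_{t_v = 1, v not a node},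
  i.e. the Taylor expansion of the reduced zeta function f_h(t_N);
  h is represented by h0 \<in> L'.\<close>
definition Zred :: "('v::finite \<Rightarrow> 'v \<Rightarrow> bool) \<Rightarrow> ('v \<Rightarrow> int) \<Rightarrow> ('v \<Rightarrow> rat) \<Rightarrow> ('v \<Rightarrow> rat) \<Rightarrow> int" where
  "Zred adj e h0 x =
     (\<Sum>l\<in>{l. in_Ldual (inter_mat adj e) l \<and> same_class l h0 \<and> zeta_coeff adj e l \<noteq> 0
              \<and> proj_N (nodes adj) l = x}. zeta_coeff adj e l)"

text \<open>A (generalized) series is a coefficient function ('v \<Rightarrow> rat) \<Rightarrow> int;
 it is a finite sum of monomials if its support is finite.\<close>
definition gsupp :: "(('v \<Rightarrow> rat) \<Rightarrow> int) \<Rightarrow> ('v \<Rightarrow> rat) set" where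
  "gsupp P = {x. P x \<noteq> 0}"

definition gmult :: "(('v \<Rightarrow> rat) \<Rightarrow> int) \<Rightarrow> (('v \<Rightarrow> rat) \<Rightarrow> int) \<Rightarrow> ('v \<Rightarrow> rat) \<Rightarrow> int" where
  "gmult P Q x = (\<Sum>y\<in>gsupp P. P y * Q (\<lambda>v. x v - y v))"

definition in_tN :: "'v set \<Rightarrow> (('v \<Rightarrow> rat) \<Rightarrow> int) \<Rightarrow> bool" where
  "in_tN N P \<longleftrightarrow> finite (gsupp P) \<and> (\<forall>x\<in>gsupp P. \<forall>v. v \<notin> N \<longrightarrow> x v = 0)"

definition avec :: "('v::finite \<Rightarrow> 'v \<Rightarrow> bool) \<Rightarrow> ('v \<Rightarrow> int) \<Rightarrow> ('v \<Rightarrow> rat) \<Rightarrow> 'v \<Rightarrow> ('v \<Rightarrow> rat)" where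
  "avec adj e lam n = (\<lambda>u. lam n * proj_N (nodes adj) (Estar (inter_mat adj e) n) u)"

text \<open>A(t_N) = prod_{n \<in> N} (1 - t_N^{a_n}), expanded.\<close>
definition Apoly :: "('v::finite \<Rightarrow> 'v \<Rightarrow> bool) \<Rightarrow> ('v \<Rightarrow> int) \<Rightarrow> ('v \<Rightarrow> rat) \<Rightarrow> ('v \<Rightarrow> rat) \<Rightarrow> int" where
  "Apoly adj e lam x =
     (\<Sum>S\<in>{S. S \<subseteq> nodes adj \<and> (\<lambda>u. \<Sum>n\<in>S. avec adj e lam n u) = x}. (-1) ^ card S)"

text \<open>R/A has negative degree in t_n.\<close>
definition neg_deg :: "('v::finite \<Rightarrow> 'v \<Rightarrow> bool) \<Rightarrow> ('v \<Rightarrow> int) \<Rightarrow> ('v \<Rightarrow> rat) \<Rightarrow> (('v \<Rightarrow> rat) \<Rightarrow> int) \<Rightarrow> 'v \<Rightarrow> bool" where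
  "neg_deg adj e lam R n \<longleftrightarrow>
     (\<forall>x\<in>gsupp R. x n < (\<Sum>m\<in>nodes adj. avec adj e lam m n))"

text \<open>Numerator of f_h - P written over A, where f_h(t_N) = R/A.\<close>
definition num_minus :: "('v::finite \<Rightarrow> 'v \<Rightarrow> bool) \<Rightarrow> ('v \<Rightarrow> int) \<Rightarrow> ('v \<Rightarrow> rat) \<Rightarrow> (('v \<Rightarrow> rat) \<Rightarrow> int) \<Rightarrow> (('v \<Rightarrow> rat) \<Rightarrow> int) \<Rightarrow> ('v \<Rightarrow> rat) \<Rightarrow> int" where
  "num_minus adj e lam R P x = R x - gmult (Apoly adj e lam) P x"

definition Pn :: "('v::finite \<Rightarrow> 'v \<Rightarrow> bool) \<Rightarrow> ('v \<Rightarrow> int) \<Rightarrow> ('v \<Rightarrow> rat) \<Rightarrow> (('v \<Rightarrow> rat) \<Rightarrow> int) \<Rightarrow> 'v \<Rightarrow> ('v \<Rightarrow> rat) \<Rightarrow> int" where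
  "Pn adj e lam R n = (THE P. in_tN (nodes adj) P \<and> (\<forall>x\<in>gsupp P. x n \<ge> 0)
      \<and> neg_deg adj e lam (num_minus adj e lam R P) n)"

definition Pedge :: "('v::finite \<Rightarrow> 'v \<Rightarrow> bool) \<Rightarrow> ('v \<Rightarrow> int) \<Rightarrow> ('v \<Rightarrow> rat) \<Rightarrow> (('v \<Rightarrow> rat) \<Rightarrow> int) \<Rightarrow> 'v set \<Rightarrow> ('v \<Rightarrow> rat) \<Rightarrow> int" where
  "Pedge adj e lam R ed = (THE P. in_tN (nodes adj) P \<and> (\<forall>x\<in>gsupp P. \<exists>n\<in>ed. x n \<ge> 0)
      \<and> (\<forall>n\<in>ed. neg_deg adj e lam (num_minus adj e lam R P) n))"

definition spath :: "('v \<Rightarrow> 'v \<Rightarrow> bool) \<Rightarrow> 'v list \<Rightarrow> bool" where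
  "spath adj xs \<longleftrightarrow> xs \<noteq> [] \<and> distinct xs \<and> (\<forall>i. Suc i < length xs \<longrightarrow> adj (xs ! i) (xs ! Suc i))"

definition orb_adj :: "('v::finite \<Rightarrow> 'v \<Rightarrow> bool) \<Rightarrow> 'v \<Rightarrow> 'v \<Rightarrow> bool" where
  "orb_adj adj n n' \<longleftrightarrow> n \<in> nodes adj \<and> n' \<in> nodes adj \<and> n \<noteq> n' \<and>
     (\<exists>xs. spath adj xs \<and> hd xs = n \<and> last xs = n' \<and>
        (\<forall>v\<in>set (butlast (tl xs)). valency adj v = 2))"

definition orb_edges :: "('v::finite \<Rightarrow> 'v \<Rightarrow> bool) \<Rightarrow> 'v set set" where
  "orb_edges adj = {{n, n'} | n n'. orb_adj adj n n'}"

definition orb_valency :: "('v::finite \<Rightarrow> 'v \<Rightarrow> bool) \<Rightarrow> 'v \<Rightarrow> nat" where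
  "orb_valency adj n = card {n'. orb_adj adj n n'}"

definition Ppart :: "('v::finite \<Rightarrow> 'v \<Rightarrow> bool) \<Rightarrow> ('v \<Rightarrow> int) \<Rightarrow> ('v \<Rightarrow> rat) \<Rightarrow> (('v \<Rightarrow> rat) \<Rightarrow> int) \<Rightarrow> ('v \<Rightarrow> rat) \<Rightarrow> int" where
  "Ppart adj e lam R x =
     (\<Sum>ed\<in>orb_edges adj. Pedge adj e lam R ed x)
     - (\<Sum>n\<in>nodes adj. (int (orb_valency adj n) - 1) * Pn adj e lam R n x)"

definition orb_gt :: "('v::finite \<Rightarrow> 'v \<Rightarrow> bool) \<Rightarrow> 'v \<Rightarrow> 'v \<Rightarrow> 'v \<Rightarrow> bool" where
  "orb_gt adj n0 n n' \<longleftrightarrow> orb_adj adj n n' \<and>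
     (\<exists>ys. spath (orb_adj adj) ys \<and> length ys \<ge> 2 \<and> hd ys = n \<and> last ys = n0 \<and> ys ! 1 = n')"

definition mult_s :: "('v::finite \<Rightarrow> 'v \<Rightarrow> bool) \<Rightarrow> 'v \<Rightarrow> ('v \<Rightarrow> rat) \<Rightarrow> int" where
  "mult_s adj n0 \<beta> = (if \<beta> n0 \<ge> 0 then 1 else 0)
     + int (card {(n, n'). orb_gt adj n0 n n' \<and> \<beta> n \<ge> 0 \<and> \<beta> n' < 0})"

end

theory Submission imports Defs "HOL-Analysis.Cartesian_Space" begin


lemma interior_nth:
  assumes "v \<in> set (butlast (tl xs))"
  shows "\<exists>i. 0 < i \<and> Suc i < length xs \<and> v = xs ! i"
proof -
  obtain j where j: "j < length (butlast (tl xs))" "v = butlast (tl xs) ! j"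
    using assms by (auto simp: in_set_conv_nth)
  then have "v = xs ! Suc j" by (simp add: nth_butlast nth_tl)
  moreover have "Suc (Suc j) < length xs" using j(1) by simp
  ultimately show ?thesis by (intro exI[of _ "Suc j"]) auto
qed

lemma all_down:
  assumes gdist: "distinct ys"
    and step: "\<forall>i. Suc i < length ys \<longrightarrow> ((ys!i \<noteq> r \<and> ys!Suc i = p (ys!i)) \<or> (ys!Suc i \<noteq> r \<and> ys!i = p (ys!Suc i)))"
    and d0: "ys!Suc 0 \<noteq> r \<and> ys!0 = p (ys!Suc 0)"
  shows "Suc i < length ys \<Longrightarrow> ys!Suc i \<noteq> r \<and> ys!i = p (ys!Suc i)"
proof (induction i)
  case 0 then show ?case using d0 by simp
next
  case (Suc i)
  then have IH: "ys!Suc i \<noteq> r \<and> ys!i = p (ys!Suc i)" by simp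
  have "ys ! i \<noteq> ys ! Suc (Suc i)" using gdist Suc.prems
    by (simp add: distinct_conv_nth)
  then show ?case using step[rule_format, of "Suc i"] Suc.prems IH by auto
qed

locale gtree =
  fixes adj :: "'v::finite \<Rightarrow> 'v \<Rightarrow> bool" and r :: 'v
  assumes tree: "is_tree adj" and r_node: "r \<in> nodes adj"
begin

lemma sym: "adj u w \<Longrightarrow> adj w u" using tree by (auto simp: is_tree_def)
lemma irr: "\<not> adj u u" using tree by (auto simp: is_tree_def)
lemma conn: "adj\<^sup>*\<^sup>* u w" using tree by (auto simp: is_tree_def)
lemma card_e: "card (graph_edges adj) + 1 = card (UNIV :: 'v set)" using tree by (auto simp: is_tree_def)

definition gdist :: "'v \<Rightarrow> nat" where "gdist v = (LEAST k. (adj ^^ k) v r)"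

lemma dist_ex: "(adj ^^ gdist v) v r"
proof -
  obtain k where "(adj ^^ k) v r" using conn[of v r] by (auto simp: rtranclp_power)
  then show ?thesis unfolding gdist_def by (rule LeastI)
qed

lemma dist_min: "(adj ^^ k) v r \<Longrightarrow> gdist v \<le> k"
  unfolding gdist_def by (rule Least_le)

lemma dist0: "gdist v = 0 \<longleftrightarrow> v = r"
proof
  assume "gdist v = 0" then show "v = r" using dist_ex[of v] by simp
next
  assume "v = r" then show "gdist v = 0" using dist_min[of 0 v] by simp
qed

lemma dist_adj: "adj v w \<Longrightarrow> gdist v \<le> gdist w + 1"
  using dist_min relpowp_Suc_I2[OF _ dist_ex[of w]] by fastforce

definition par :: "'v \<Rightarrow> 'v" where "par v = (SOME w. adj v w \<and> gdist w + 1 = gdist v)"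

lemma par: assumes "v \<noteq> r" shows "adj v (par v) \<and> gdist (par v) + 1 = gdist v"
proof -
  obtain j where j: "gdist v = Suc j" using assms dist0 by (cases "gdist v") auto
  obtain w where w: "adj v w" "(adj ^^ j) w r" using dist_ex[of v] j relpowp_Suc_D2 by fastforce
  have "gdist w \<le> j" using dist_min w(2) .
  moreover have "gdist v \<le> gdist w + 1" using dist_adj w(1) .
  ultimately have "adj v w \<and> gdist w + 1 = gdist v" using w j by auto
  then show ?thesis unfolding par_def by (rule someI)
qed

lemma par_lt: "v \<noteq> r \<Longrightarrow> gdist (par v) < gdist v" using par by fastforce

lemma edges_par: assumes "adj u w"
  shows "(u \<noteq> r \<and> w = par u) \<or> (w \<noteq> r \<and> u = par w)"
proof -
  let ?f = "\<lambda>c. {c, par c}"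
  let ?C = "UNIV - {r}"
  have inj: "inj_on ?f ?C"
  proof (rule inj_onI)
    fix c c' assume "c \<in> ?C" "c' \<in> ?C" "?f c = ?f c'"
    then show "c = c'" using par_lt[of c] par_lt[of c'] by (auto simp: doubleton_eq_iff)
  qed
  have sub: "?f ` ?C \<subseteq> graph_edges adj"
    unfolding graph_edges_def using par by blast
  have fin: "finite (graph_edges adj)" by simp
  have "card (?f ` ?C) = card ?C" using card_image[OF inj] .
  also have "\<dots> = card (UNIV :: 'v set) - 1" by (simp add: card_Diff_singleton)
  also have "\<dots> = card (graph_edges adj)" using card_e by simp
  finally have eq: "?f ` ?C = graph_edges adj" using card_subset_eq[OF fin sub] by simp
  have "{u, w} \<in> graph_edges adj" using assms unfolding graph_edges_def by blast
  then obtain c where "c \<noteq> r" "{u, w} = {c, par c}" using eq by blast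
  then show ?thesis by (auto simp: doubleton_eq_iff)
qed

lemma adj_iff: "adj u w \<longleftrightarrow> (u \<noteq> r \<and> w = par u) \<or> (w \<noteq> r \<and> u = par w)"
  using edges_par par sym by blast

abbreviation pit :: "nat \<Rightarrow> 'v \<Rightarrow> 'v" where "pit k v \<equiv> (par ^^ k) v"

lemma dist_pit: "k \<le> gdist v \<Longrightarrow> gdist (pit k v) = gdist v - k"
proof (induction k)
  case 0 then show ?case by simp
next
  case (Suc k)
  then have h: "gdist (pit k v) = gdist v - k" by simp
  then have "pit k v \<noteq> r" using Suc.prems dist0[of "pit k v"] by simp
  then have "Suc (gdist (par (pit k v))) = gdist v - k" using par[of "pit k v"] h by simp
  then show ?case by simp
qed

lemma pit_dist: "pit (gdist v) v = r" using dist_pit[of "gdist v" v] dist0 by simp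

lemma valency_ge2:
  assumes "x \<noteq> r" "c \<noteq> r" "par c = x"
  shows "valency adj x \<ge> 2"
proof -
  have "par x \<noteq> c" using par_lt assms by (metis less_asym)
  moreover have "{par x, c} \<subseteq> {w. adj x w}" using par assms sym by auto
  ultimately show ?thesis unfolding valency_def
    by (metis card_2_iff card_mono finite)
qed

lemma valency_ge3:
  assumes "x \<noteq> r" "c \<noteq> r" "par c = x" "c' \<noteq> r" "par c' = x" "c \<noteq> c'"
  shows "valency adj x \<ge> 3"
proof -
  have "par x \<noteq> c" "par x \<noteq> c'" using par_lt assms by (metis less_asym)+
  moreover have "{par x, c, c'} \<subseteq> {w. adj x w}" using par[of x] par[of c] par[of c'] assms sym by auto
  ultimately have "card {par x, c, c'} \<le> valency adj x" unfolding valency_def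
    by (metis card_mono finite)
  moreover have "card {par x, c, c'} = 3" using \<open>par x \<noteq> c\<close> \<open>par x \<noteq> c'\<close> assms(6) by simp
  ultimately show ?thesis by simp
qed


abbreviation NN where "NN \<equiv> nodes adj"

definition kq :: "'v \<Rightarrow> nat" where "kq n = (LEAST k. 0 < k \<and> pit k n \<in> NN)"
definition Qp :: "'v \<Rightarrow> 'v" where "Qp n = pit (kq n) n"

lemma kq: assumes "n \<noteq> r"
  shows "0 < kq n" "kq n \<le> gdist n" "pit (kq n) n \<in> NN" "\<And>i. 0 < i \<Longrightarrow> i < kq n \<Longrightarrow> pit i n \<notin> NN"
proof -
  have ex: "0 < gdist n \<and> pit (gdist n) n \<in> NN" using assms dist0 pit_dist r_node by auto
  show "0 < kq n" "pit (kq n) n \<in> NN" unfolding kq_def using LeastI[of "\<lambda>k. 0 < k \<and> pit k n \<in> NN", OF ex] by auto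
  show "kq n \<le> gdist n" unfolding kq_def using Least_le[of "\<lambda>k. 0 < k \<and> pit k n \<in> NN", OF ex] .
  show "\<And>i. 0 < i \<Longrightarrow> i < kq n \<Longrightarrow> pit i n \<notin> NN" unfolding kq_def using not_less_Least by blast
qed

lemma Qp_node: "n \<noteq> r \<Longrightarrow> Qp n \<in> NN" using kq unfolding Qp_def by blast

lemma Qp_lt: "n \<noteq> r \<Longrightarrow> gdist (Qp n) < gdist n"
  using kq[of n] dist_pit[of "kq n" n] unfolding Qp_def by simp

lemma spath_rev: assumes "spath adj xs" shows "spath adj (rev xs)"
  unfolding spath_def
proof (intro conjI allI impI)
  show "rev xs \<noteq> []" "distinct (rev xs)" using assms unfolding spath_def by auto
  fix i assume i: "Suc i < length (rev xs)"
  define j where "j = length xs - Suc (Suc i)"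
  have j: "Suc j < length xs" "Suc j = length xs - Suc i" using i unfolding j_def by auto
  have "adj (xs ! j) (xs ! Suc j)" using assms j(1) unfolding spath_def by blast
  moreover have "rev xs ! i = xs ! Suc j" "rev xs ! Suc i = xs ! j"
    using i j unfolding j_def by (simp_all add: rev_nth)
  ultimately show "adj (rev xs ! i) (rev xs ! Suc i)" using sym by simp
qed

lemma interior_rev: "set (butlast (tl (rev xs))) = set (butlast (tl xs))"
  by (metis butlast_rev set_rev butlast_tl rev_swap)

lemma up_path:
  assumes sp: "spath adj xs" and len: "Suc 0 < length xs"
    and int: "\<forall>v\<in>set (butlast (tl xs)). valency adj v = 2"
    and lastN: "last xs \<in> NN" and up0: "hd xs \<noteq> r" "xs ! 1 = par (hd xs)"
  shows "last xs = Qp (hd xs)"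
proof -
  have dis: "distinct xs" and ad: "\<And>i. Suc i < length xs \<Longrightarrow> adj (xs!i) (xs!Suc i)"
    using sp unfolding spath_def by auto
  have hd: "hd xs = xs ! 0" using len by (cases xs) auto
  have intv: "valency adj (xs!i) = 2" if "0 < i" "Suc i < length xs" for i
  proof -
    have "xs ! i \<in> set (butlast (tl xs))" using that
      by (auto simp: in_set_conv_nth nth_butlast nth_tl intro!: exI[of _ "i - 1"])
    then show ?thesis using int by blast
  qed
  have intN: "xs!i \<notin> NN" if "0 < i" "Suc i < length xs" for i
    using intv[OF that] unfolding nodes_def by simp
  have allup: "xs!i \<noteq> r \<and> xs!Suc i = par (xs!i)" if "Suc i < length xs" for i
    using that
  proof (induction i)
    case 0 then show ?case using up0 hd by simp
  next
    case (Suc i)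
    then have IH: "xs!i \<noteq> r \<and> xs!Suc i = par (xs!i)" by simp
    have xr: "xs ! Suc i \<noteq> r"
    proof
      assume "xs ! Suc i = r"
      then have "xs ! Suc i \<in> NN" using r_node by simp
      then show False using intN[of "Suc i"] Suc.prems by simp
    qed
    show ?case
    proof (rule ccontr)
      assume nu: "\<not> (xs!Suc i \<noteq> r \<and> xs!Suc (Suc i) = par (xs!Suc i))"
      note disj = adj_iff[THEN iffD1, OF ad[OF Suc.prems]]
      have dn: "xs!Suc (Suc i) \<noteq> r" "xs!Suc i = par (xs!Suc (Suc i))"
        using disj nu xr by auto
      have ne: "xs ! i \<noteq> xs ! Suc (Suc i)" using dis Suc.prems by (simp add: distinct_conv_nth)
      have "valency adj (xs!Suc i) \<ge> 3"
        by (rule valency_ge3[OF xr _ _ dn(1) dn(2)[symmetric] ne]) (use IH in auto)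
      then show False using intv[of "Suc i"] Suc.prems by simp
    qed
  qed
  have pitx: "xs!i = pit i (hd xs)" if "i < length xs" for i
    using that
  proof (induction i)
    case 0 then show ?case using hd by simp
  next
    case (Suc i) then show ?case using allup[of i] by simp
  qed
  let ?m = "length xs - 1"
  have lst: "last xs = pit ?m (hd xs)"
  proof -
    have "xs \<noteq> []" using len by auto
    then have "last xs = xs ! ?m" by (rule last_conv_nth)
    then show ?thesis using pitx[of ?m] len by simp
  qed
  have "kq (hd xs) = ?m" unfolding kq_def
  proof (rule Least_equality)
    show "0 < ?m \<and> pit ?m (hd xs) \<in> NN" using len lst lastN by simp
  next
    fix k assume k: "0 < k \<and> pit k (hd xs) \<in> NN"
    show "?m \<le> k"
    proof (rule ccontr)
      assume "\<not> ?m \<le> k"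
      then have "Suc k < length xs" by simp
      then show False using intN[of k] pitx[of k] k by simp
    qed
  qed
  then show ?thesis using lst unfolding Qp_def by simp
qed

lemma down_path:
  assumes sp: "spath adj xs" and len: "Suc 0 < length xs"
    and nup: "\<not> (hd xs \<noteq> r \<and> xs ! 1 = par (hd xs))"
  shows "last xs \<noteq> r \<and> rev xs ! 1 = par (last xs)"
proof -
  have dis: "distinct xs" and ad: "\<And>i. Suc i < length xs \<Longrightarrow> adj (xs!i) (xs!Suc i)"
    using sp unfolding spath_def by auto
  have hd: "hd xs = xs ! 0" using len by (cases xs) auto
  have step: "\<forall>i. Suc i < length xs \<longrightarrow> ((xs!i \<noteq> r \<and> xs!Suc i = par (xs!i)) \<or> (xs!Suc i \<noteq> r \<and> xs!i = par (xs!Suc i)))"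
    using adj_iff[THEN iffD1, OF ad] by blast
  have d0: "xs!Suc 0 \<noteq> r \<and> xs!0 = par (xs!Suc 0)" using step len nup hd by auto
  have "xs!Suc (length xs - 2) \<noteq> r \<and> xs!(length xs - 2) = par (xs!Suc (length xs - 2))"
    using all_down[OF dis step d0, of "length xs - 2"] len by simp
  moreover have "Suc (length xs - 2) = length xs - 1" using len by simp
  moreover have "last xs = xs ! (length xs - 1)" using len by (intro last_conv_nth) auto
  moreover have "rev xs ! 1 = xs ! (length xs - 2)" using len by (simp add: rev_nth numeral_2_eq_2)
  ultimately show ?thesis by (simp add: numeral_2_eq_2)
qed

lemma orb_adj_sym: assumes "orb_adj adj n n'" shows "orb_adj adj n' n"
proof -
  obtain xs where xs: "n \<in> NN" "n' \<in> NN" "n \<noteq> n'" "spath adj xs" "hd xs = n" "last xs = n'"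
    "\<forall>v\<in>set (butlast (tl xs)). valency adj v = 2" using assms unfolding orb_adj_def by blast
  have ne: "xs \<noteq> []" using xs(4) unfolding spath_def by simp
  have "spath adj (rev xs)" "hd (rev xs) = n'" "last (rev xs) = n"
    "\<forall>v\<in>set (butlast (tl (rev xs))). valency adj v = 2"
    using spath_rev[OF xs(4)] xs ne interior_rev[of xs] by (simp_all add: hd_rev last_rev)
  then show ?thesis unfolding orb_adj_def using xs(1-3) by blast
qed

lemma orb_adj_Qp: assumes "n \<in> NN" "n \<noteq> r" shows "orb_adj adj n (Qp n)"
proof -
  define k where "k = kq n"
  define xs where "xs = map (\<lambda>i. pit i n) [0..<Suc k]"
  have k: "0 < k" "k \<le> gdist n" "pit k n \<in> NN" "\<And>i. 0 < i \<Longrightarrow> i < k \<Longrightarrow> pit i n \<notin> NN"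
    using kq[OF assms(2)] unfolding k_def by auto
  have lenx: "length xs = Suc k" unfolding xs_def by simp
  have nth: "xs ! i = pit i n" if "i < Suc k" for i
    unfolding xs_def using that by (simp only: nth_map_upt) simp
  have dpi: "gdist (pit i n) = gdist n - i" if "i \<le> k" for i using dist_pit that k(2) by simp
  have nr: "pit i n \<noteq> r" if "i < k" for i
  proof
    assume "pit i n = r"
    then have "gdist (pit i n) = 0" using dist0 by simp
    then show False using dpi[of i] that k(2) by simp
  qed
  have dis: "distinct xs" unfolding distinct_conv_nth
  proof (intro allI impI)
    fix i j assume ij: "i < length xs" "j < length xs" "i \<noteq> j"
    then have "gdist (xs ! i) \<noteq> gdist (xs ! j)" using dpi[of i] dpi[of j] k(2) nth[of i] nth[of j] lenx
      by simp
    then show "xs ! i \<noteq> xs ! j" by metis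
  qed
  have ad: "adj (xs ! i) (xs ! Suc i)" if "Suc i < length xs" for i
  proof -
    have "xs ! i = pit i n" "xs ! Suc i = par (pit i n)" using nth[of i] nth[of "Suc i"] that lenx by simp_all
    then show ?thesis using par[OF nr[of i]] that lenx by simp
  qed
  have sp: "spath adj xs" unfolding spath_def using dis ad lenx by auto
  have hd: "hd xs = n" using nth[of 0] lenx by (cases xs) auto
  have lst: "last xs = Qp n"
  proof -
    have "xs \<noteq> []" using lenx by auto
    then have "last xs = xs ! k" using lenx by (simp add: last_conv_nth)
    then show ?thesis using nth[of k] unfolding Qp_def k_def by simp
  qed
  have int: "\<forall>v\<in>set (butlast (tl xs)). valency adj v = 2"
  proof
    fix v assume "v \<in> set (butlast (tl xs))"
    from interior_nth[OF this] obtain i where i: "0 < i" "Suc i < length xs" "v = xs ! i" by (elim exE conjE)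
    have v: "v = pit i n" "i < k" using nth[of i] lenx i(2,3) by simp_all
    have vN: "v \<notin> NN" using k(4)[OF i(1) v(2)] v(1) by simp
    obtain j where j: "i = Suc j" using i(1) by (cases i) auto
    have ge: "valency adj v \<ge> 2"
    proof (rule valency_ge2)
      show "v \<noteq> r" using vN r_node by auto
      show "pit j n \<noteq> r" using nr[of j] v(2) j by simp
      show "par (pit j n) = v" using v(1) j by simp
    qed
    then show "valency adj v = 2" using vN unfolding nodes_def by simp
  qed
  have "Qp n \<in> NN" using Qp_node[OF assms(2)] .
  moreover have "n \<noteq> Qp n" using Qp_lt[OF assms(2)] by auto
  ultimately show ?thesis unfolding orb_adj_def using assms(1) sp hd lst int by blast
qed

lemma orb_adj_iff: "orb_adj adj n n' \<longleftrightarrow> n \<in> NN \<and> n' \<in> NN \<and> ((n \<noteq> r \<and> n' = Qp n) \<or> (n' \<noteq> r \<and> n = Qp n'))"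
proof
  assume a: "orb_adj adj n n'"
  then obtain xs where xs: "n \<in> NN" "n' \<in> NN" "n \<noteq> n'" "spath adj xs" "hd xs = n" "last xs = n'"
    "\<forall>v\<in>set (butlast (tl xs)). valency adj v = 2" unfolding orb_adj_def by blast
  have len: "Suc 0 < length xs"
  proof (rule ccontr)
    assume "\<not> ?thesis"
    then have "length xs = 1" using xs(4) unfolding spath_def by (cases xs) auto
    then show False using xs by (cases xs) auto
  qed
  show "n \<in> NN \<and> n' \<in> NN \<and> ((n \<noteq> r \<and> n' = Qp n) \<or> (n' \<noteq> r \<and> n = Qp n'))"
  proof (cases "hd xs \<noteq> r \<and> xs ! 1 = par (hd xs)")
    case True
    then show ?thesis using up_path[OF xs(4) len xs(7)] xs by simp
  next
    case False
    have d: "last xs \<noteq> r \<and> rev xs ! 1 = par (last xs)" using down_path[OF xs(4) len False] .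
    have "last (rev xs) = Qp (hd (rev xs))"
      using up_path[OF spath_rev[OF xs(4)]] len xs d interior_rev[of xs]
      by (simp add: hd_rev last_rev)
    then show ?thesis using xs d by (simp add: hd_rev last_rev)
  qed
next
  assume "n \<in> NN \<and> n' \<in> NN \<and> ((n \<noteq> r \<and> n' = Qp n) \<or> (n' \<noteq> r \<and> n = Qp n'))"
  then show "orb_adj adj n n'" using orb_adj_Qp orb_adj_sym by blast
qed


lemma spath_Cons:
  assumes "spath R ys" "x \<notin> set ys" "R x (hd ys)"
  shows "spath R (x # ys)"
  unfolding spath_def
proof (intro conjI allI impI)
  show "x # ys \<noteq> []" by simp
  show "distinct (x # ys)" using assms unfolding spath_def by simp
  fix i assume i: "Suc i < length (x # ys)"
  show "R ((x # ys) ! i) ((x # ys) ! Suc i)"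
  proof (cases i)
    case 0 then show ?thesis using assms(1,3) unfolding spath_def by (cases ys) auto
  next
    case (Suc j) then show ?thesis using assms(1) i unfolding spath_def by auto
  qed
qed

lemma orb_path_ex: "n \<in> NN \<Longrightarrow> \<exists>ys. spath (orb_adj adj) ys \<and> hd ys = n \<and> last ys = r \<and> (\<forall>y\<in>set ys. gdist y \<le> gdist n)"
proof (induction "gdist n" arbitrary: n rule: less_induct)
  case less
  show ?case
  proof (cases "n = r")
    case True
    then show ?thesis by (intro exI[of _ "[r]"]) (auto simp: spath_def)
  next
    case False
    have m: "Qp n \<in> NN" "gdist (Qp n) < gdist n" using Qp_node Qp_lt False by auto
    obtain ys where ys: "spath (orb_adj adj) ys" "hd ys = Qp n" "last ys = r" "\<forall>y\<in>set ys. gdist y \<le> gdist (Qp n)"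
      using less(1)[OF m(2) m(1)] by blast
    have ne: "ys \<noteq> []" using ys(1) unfolding spath_def by simp
    have "n \<notin> set ys" using ys(4) m(2) by fastforce
    then have "spath (orb_adj adj) (n # ys)" using spath_Cons[OF ys(1)] ys(2) orb_adj_Qp[OF less(2) False] by simp
    moreover have "\<forall>y\<in>set (n # ys). gdist y \<le> gdist n" using ys(4) m(2) by auto
    ultimately show ?thesis using ys(3) ne by (intro exI[of _ "n # ys"]) auto
  qed
qed

lemma orb_gt_iff: "orb_gt adj r n n' \<longleftrightarrow> n \<in> NN \<and> n \<noteq> r \<and> n' = Qp n"
proof
  assume "n \<in> NN \<and> n \<noteq> r \<and> n' = Qp n"
  then have a: "n \<in> NN" "n \<noteq> r" "n' = Qp n" by auto
  have m: "Qp n \<in> NN" "gdist (Qp n) < gdist n" using Qp_node Qp_lt a by auto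
  obtain ys where ys: "spath (orb_adj adj) ys" "hd ys = Qp n" "last ys = r" "\<forall>y\<in>set ys. gdist y \<le> gdist (Qp n)"
    using orb_path_ex[OF m(1)] by blast
  have ne: "ys \<noteq> []" using ys(1) unfolding spath_def by simp
  have "n \<notin> set ys" using ys(4) m(2) by fastforce
  then have "spath (orb_adj adj) (n # ys)" using spath_Cons[OF ys(1)] ys(2) orb_adj_Qp[OF a(1,2)] by simp
  moreover have "(n # ys) ! 1 = Qp n" using ne ys(2) by (cases ys) auto
  ultimately show "orb_gt adj r n n'" unfolding orb_gt_def using orb_adj_Qp[OF a(1,2)] a(3) ys(3) ne
    by (intro conjI exI[of _ "n # ys"]) (auto simp: Suc_le_eq)
next
  assume "orb_gt adj r n n'"
  then obtain ys where o: "orb_adj adj n n'" and ys: "spath (orb_adj adj) ys" "2 \<le> length ys"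
    "hd ys = n" "last ys = r" "ys ! 1 = n'" unfolding orb_gt_def by blast
  have nN: "n \<in> NN" using o orb_adj_iff by blast
  have dis: "distinct ys" and ad: "\<And>i. Suc i < length ys \<Longrightarrow> orb_adj adj (ys!i) (ys!Suc i)"
    using ys(1) unfolding spath_def by auto
  have hd: "hd ys = ys ! 0" using ys(2) by (cases ys) auto
  have step: "\<forall>i. Suc i < length ys \<longrightarrow> ((ys!i \<noteq> r \<and> ys!Suc i = Qp (ys!i)) \<or> (ys!Suc i \<noteq> r \<and> ys!i = Qp (ys!Suc i)))"
  proof (intro allI impI)
    fix i assume "Suc i < length ys"
    from orb_adj_iff[THEN iffD1, OF ad[OF this]]
    show "(ys!i \<noteq> r \<and> ys!Suc i = Qp (ys!i)) \<or> (ys!Suc i \<noteq> r \<and> ys!i = Qp (ys!Suc i))" by blast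
  qed
  show "n \<in> NN \<and> n \<noteq> r \<and> n' = Qp n"
  proof (cases "ys!0 \<noteq> r \<and> ys!Suc 0 = Qp (ys!0)")
    case True then show ?thesis using nN hd ys(3,5) by simp
  next
    case False
    have "Suc 0 < length ys" using ys(2) by simp
    note s0 = step[rule_format, OF this]
    have d0: "ys!Suc 0 \<noteq> r \<and> ys!0 = Qp (ys!Suc 0)" using s0 False by blast
    have "ys!Suc (length ys - 2) \<noteq> r" using all_down[OF dis step d0, of "length ys - 2"] ys(2) by simp
    moreover have "Suc (length ys - 2) = length ys - 1" using ys(2) by simp
    moreover have "last ys = ys ! (length ys - 1)" using ys(2) by (intro last_conv_nth) auto
    ultimately show ?thesis using ys(4) by simp
  qed
qed

abbreviation CC where "CC \<equiv> NN - {r}"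

lemma Qp_Qp: "c \<in> CC \<Longrightarrow> Qp c \<in> CC \<Longrightarrow> Qp (Qp c) \<noteq> c"
  using Qp_lt by (metis DiffD2 insertI1 less_asym')

lemma orbval: assumes "n \<in> NN"
  shows "int (orb_valency adj n) = (if n \<noteq> r then 1 else 0) + int (card {c \<in> CC. Qp c = n})"
proof -
  have eq: "{n'. orb_adj adj n n'} = (if n \<noteq> r then {Qp n} else {}) \<union> {c \<in> CC. Qp c = n}"
    using assms Qp_node by (auto simp: orb_adj_iff)
  have disj: "(if n \<noteq> r then {Qp n} else {}) \<inter> {c \<in> CC. Qp c = n} = {}"
    using Qp_Qp assms Qp_node by auto
  have "orb_valency adj n = card (if n \<noteq> r then {Qp n} else {}) + card {c \<in> CC. Qp c = n}"
    unfolding orb_valency_def eq by (rule card_Un_disjoint) (use disj in auto)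
  then show ?thesis by simp
qed

lemma orb_edges_eq: "orb_edges adj = (\<lambda>c. {c, Qp c}) ` CC"
proof
  show "orb_edges adj \<subseteq> (\<lambda>c. {c, Qp c}) ` CC"
  proof
    fix ed assume "ed \<in> orb_edges adj"
    then obtain n n' where ed: "ed = {n, n'}" "orb_adj adj n n'" unfolding orb_edges_def by blast
    then show "ed \<in> (\<lambda>c. {c, Qp c}) ` CC" unfolding orb_adj_iff by (auto simp: insert_commute)
  qed
  show "(\<lambda>c. {c, Qp c}) ` CC \<subseteq> orb_edges adj"
    unfolding orb_edges_def using orb_adj_Qp by blast
qed

lemma inj_edges: "inj_on (\<lambda>c. {c, Qp c}) CC"
proof (rule inj_onI)
  fix c c' assume c: "c \<in> CC" "c' \<in> CC" "{c, Qp c} = {c', Qp c'}"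
  then show "c = c'" using Qp_lt[of c] Qp_lt[of c'] by (auto simp: doubleton_eq_iff)
qed

lemma count_identity:
  fixes \<beta> :: "'v \<Rightarrow> rat"
  defines "ind \<equiv> \<lambda>x. (if 0 \<le> \<beta> x then 1 else 0 :: int)"
  shows "(\<Sum>ed\<in>orb_edges adj. (if \<exists>n\<in>ed. 0 \<le> \<beta> n then 1 else 0 :: int))
       - (\<Sum>n\<in>NN. (int (orb_valency adj n) - 1) * ind n) = mult_s adj r \<beta>"
proof -
  have S1: "(\<Sum>ed\<in>orb_edges adj. (if \<exists>n\<in>ed. 0 \<le> \<beta> n then 1 else 0 :: int))
      = (\<Sum>c\<in>CC. (if 0 \<le> \<beta> c \<or> 0 \<le> \<beta> (Qp c) then 1 else 0))"
    unfolding orb_edges_eq by (simp add: sum.reindex[OF inj_edges])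
  have S2: "(\<Sum>n\<in>NN. (int (orb_valency adj n) - 1) * ind n)
      = (\<Sum>n\<in>NN. int (card {c \<in> CC. Qp c = n}) * ind n) - ind r"
  proof -
    have "(\<Sum>n\<in>NN. (int (orb_valency adj n) - 1) * ind n)
       = (\<Sum>n\<in>NN. int (card {c \<in> CC. Qp c = n}) * ind n + (if n = r then - ind n else 0))"
      by (rule sum.cong) (auto simp: orbval algebra_simps)
    also have "\<dots> = (\<Sum>n\<in>NN. int (card {c \<in> CC. Qp c = n}) * ind n) - ind r"
      using r_node by (simp add: sum.distrib)
    finally show ?thesis .
  qed
  have S3: "(\<Sum>n\<in>NN. int (card {c \<in> CC. Qp c = n}) * ind n) = (\<Sum>c\<in>CC. ind (Qp c))"
  proof -
    have "(\<Sum>c\<in>CC. ind (Qp c)) = (\<Sum>n\<in>NN. \<Sum>c\<in>{c \<in> CC. Qp c = n}. ind (Qp c))"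
      by (rule sum.group[symmetric]) (use Qp_node in auto)
    also have "\<dots> = (\<Sum>n\<in>NN. int (card {c \<in> CC. Qp c = n}) * ind n)"
      by (rule sum.cong) auto
    finally show ?thesis by simp
  qed
  have S4: "mult_s adj r \<beta> = ind r + (\<Sum>c\<in>CC. (if 0 \<le> \<beta> c \<and> \<beta> (Qp c) < 0 then 1 else 0))"
  proof -
    have eq: "{(n, n'). orb_gt adj r n n' \<and> \<beta> n \<ge> 0 \<and> \<beta> n' < 0}
        = (\<lambda>c. (c, Qp c)) ` {c \<in> CC. 0 \<le> \<beta> c \<and> \<beta> (Qp c) < 0}"
      by (auto simp: orb_gt_iff)
    have "card {(n, n'). orb_gt adj r n n' \<and> \<beta> n \<ge> 0 \<and> \<beta> n' < 0} = card {c \<in> CC. 0 \<le> \<beta> c \<and> \<beta> (Qp c) < 0}"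
      unfolding eq by (rule card_image) (auto simp: inj_on_def)
    also have "int \<dots> = (\<Sum>c\<in>CC. (if 0 \<le> \<beta> c \<and> \<beta> (Qp c) < 0 then 1 else 0))"
      by (simp add: sum.If_cases Int_def conj_commute)
    finally show ?thesis unfolding mult_s_def ind_def by simp
  qed
  have "(\<Sum>c\<in>CC. (if 0 \<le> \<beta> c \<or> 0 \<le> \<beta> (Qp c) then 1 else 0 :: int)) - (\<Sum>c\<in>CC. ind (Qp c))
      = (\<Sum>c\<in>CC. (if 0 \<le> \<beta> c \<and> \<beta> (Qp c) < 0 then 1 else 0))"
    unfolding sum_subtractf[symmetric] by (rule sum.cong) (auto simp: ind_def)
  then show ?thesis using S1 S2 S3 S4 by simp
qed

end


lemma quad_form:
  "(\<Sum>v\<in>UNIV. \<Sum>w\<in>UNIV. z v * of_int (I v w) * z w) = (\<Sum>w\<in>UNIV. z w * form_E I z w)"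
proof -
  have "(\<Sum>w\<in>UNIV. z w * form_E I z w) = (\<Sum>w\<in>UNIV. \<Sum>v\<in>UNIV. z v * of_int (I v w) * z w)"
    unfolding form_E_def by (simp add: sum_distrib_left mult_ac)
  also have "\<dots> = (\<Sum>v\<in>UNIV. \<Sum>w\<in>UNIV. z v * of_int (I v w) * z w)" by (rule sum.swap)
  finally show ?thesis by simp
qed

lemma negdef_rat:
  fixes I :: "'v::finite \<Rightarrow> 'v \<Rightarrow> int" and z :: "'v \<Rightarrow> rat"
  assumes "neg_definite I" "\<exists>v. z v \<noteq> 0"
  shows "(\<Sum>v\<in>UNIV. \<Sum>w\<in>UNIV. z v * of_int (I v w) * z w) < 0"
proof -
  let ?x = "\<lambda>v. (of_rat (z v) :: real)"
  have ex: "\<exists>v. ?x v \<noteq> 0" using assms(2) by simp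
  have "(\<exists>v. ?x v \<noteq> 0) \<longrightarrow> (\<Sum>v\<in>UNIV. \<Sum>w\<in>UNIV. ?x v * of_int (I v w) * ?x w) < 0"
    using assms(1) unfolding neg_definite_def by (rule spec)
  then have "(\<Sum>v\<in>UNIV. \<Sum>w\<in>UNIV. ?x v * of_int (I v w) * ?x w) < 0"
    using ex by blast
  moreover have "(\<Sum>v\<in>UNIV. \<Sum>w\<in>UNIV. ?x v * of_int (I v w) * ?x w)
     = of_rat (\<Sum>v\<in>UNIV. \<Sum>w\<in>UNIV. z v * of_int (I v w) * z w)"
    by (simp only: of_rat_sum of_rat_mult of_rat_of_int_eq)
  ultimately show ?thesis by (simp add: of_rat_less_0_iff)
qed

lemma formE_inj:
  fixes I :: "'v::finite \<Rightarrow> 'v \<Rightarrow> int"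
  assumes nd: "neg_definite I" and eq: "\<And>w. form_E I x w = form_E I y w"
  shows "x = y"
proof (rule ccontr)
  assume xy: "x \<noteq> y"
  define z where "z = (\<lambda>v. x v - y v)"
  have ne: "\<exists>v. z v \<noteq> 0"
  proof (rule ccontr)
    assume "\<not> (\<exists>v. z v \<noteq> 0)"
    then have "\<And>v. x v = y v" unfolding z_def by simp
    then show False using xy by (simp add: fun_eq_iff)
  qed
  have z0: "form_E I z w = 0" for w
  proof -
    have "form_E I z w = form_E I x w - form_E I y w"
      unfolding z_def form_E_def by (simp only: left_diff_distrib sum_subtractf)
    then show ?thesis using eq[of w] by simp
  qed
  have "(\<Sum>v\<in>UNIV. \<Sum>w\<in>UNIV. z v * of_int (I v w) * z w) = 0" unfolding quad_form z0 by simp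
  then show False using negdef_rat[OF nd ne] by simp
qed

lemma Estar_ex:
  fixes I :: "'v::finite \<Rightarrow> 'v \<Rightarrow> int"
  assumes nd: "neg_definite I"
  shows "\<exists>x. \<forall>w. form_E I x w = (if v = w then -1 else 0)"
proof -
  define M :: "rat^'v^'v" where "M = (\<chi> w u. of_int (I u w))"
  have fe: "(M *v x) $ w = form_E I (\<lambda>u. x $ u) w" for x w
    unfolding M_def matrix_vector_mult_def form_E_def by (simp add: mult.commute)
  have inj: "inj ((*v) M)"
  proof (rule injI)
    fix x y assume xy: "M *v x = M *v y"
    have "form_E I (\<lambda>u. x $ u) w = form_E I (\<lambda>u. y $ u) w" for w
      using fe[of x w] fe[of y w] xy by simp
    then have "(\<lambda>u. x $ u) = (\<lambda>u. y $ u)" by (rule formE_inj[OF nd])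
    then show "x = y" by (simp add: vec_eq_iff fun_eq_iff)
  qed
  have "surj ((*v) M)"
    by (rule vec.linear_inj_imp_surj[OF matrix_vector_mul_linear_gen inj])
  then obtain x where x: "M *v x = (\<chi> w. if v = w then -1 else 0)"
    using surjD[of "(*v) M" "\<chi> w. if v = w then -1 else 0"] by auto
  have "form_E I (\<lambda>u. x $ u) w = (if v = w then -1 else 0)" for w
    using fe[of x w] x by simp
  then show ?thesis by blast
qed

lemma Estar_prop:
  fixes I :: "'v::finite \<Rightarrow> 'v \<Rightarrow> int"
  assumes nd: "neg_definite I"
  shows "form_E I (Estar I v) w = (if v = w then -1 else 0)"
proof -
  obtain x where x: "\<forall>w. form_E I x w = (if v = w then -1 else 0)" using Estar_ex[OF nd] by blast
  have "Estar I v = x" unfolding Estar_def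
  proof (rule the_equality)
    show "\<forall>w. form_E I x w = (if v = w then -1 else 0)" by fact
    fix y assume "\<forall>w. form_E I y w = (if v = w then -1 else 0)"
    then show "y = x" using x by (intro formE_inj[OF nd]) simp
  qed
  then show ?thesis using x by simp
qed

lemma Estar_nonneg:
  fixes adj :: "'v::finite \<Rightarrow> 'v \<Rightarrow> bool"
  assumes nd: "neg_definite (inter_mat adj e)"
  shows "Estar (inter_mat adj e) v u \<ge> 0"
proof -
  let ?I = "inter_mat adj e"
  define x where "x = Estar ?I v"
  define q where "q = (\<lambda>u. max (- x u) 0)"
  define p where "p = (\<lambda>u. max (x u) 0)"
  have xpq: "x u = p u - q u" for u unfolding p_def q_def by auto
  have pq: "p u * q u = 0" for u unfolding p_def q_def by (auto simp: max_def)
  have q0: "q u \<ge> 0" "p u \<ge> 0" for u unfolding p_def q_def by auto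
  have I0: "u \<noteq> w \<Longrightarrow> of_int (?I u w) \<ge> (0::rat)" for u w unfolding inter_mat_def by auto
  have A1: "form_E ?I x w = (if v = w then -1 else 0)" for w unfolding x_def using Estar_prop[OF nd] .
  have "(\<Sum>w\<in>UNIV. q w * form_E ?I x w) = (\<Sum>w\<in>UNIV. (if v = w then - q w else 0))"
    by (rule sum.cong) (auto simp: A1)
  then have A: "(\<Sum>w\<in>UNIV. q w * form_E ?I x w) = - q v" by simp
  have B: "(\<Sum>w\<in>UNIV. q w * form_E ?I x w)
      = (\<Sum>w\<in>UNIV. \<Sum>u\<in>UNIV. q w * p u * of_int (?I u w)) - (\<Sum>w\<in>UNIV. \<Sum>u\<in>UNIV. q w * q u * of_int (?I u w))"
    unfolding form_E_def xpq by (simp add: sum_distrib_left sum_subtractf[symmetric] algebra_simps)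
  have C: "(\<Sum>w\<in>UNIV. \<Sum>u\<in>UNIV. q w * p u * of_int (?I u w)) \<ge> 0"
  proof (intro sum_nonneg)
    fix w u
    show "q w * p u * of_int (?I u w) \<ge> 0"
    proof (cases "u = w")
      case True
      then have "q w * p u = 0" using pq[of w] by (simp add: mult.commute)
      then show ?thesis by (metis mult_zero_left order_refl)
    next
      case False then show ?thesis using I0[OF False] q0 by simp
    qed
  qed
  have "(\<Sum>w\<in>UNIV. \<Sum>u\<in>UNIV. q w * q u * of_int (?I u w)) \<ge> 0"
    using A B C q0[of v] by linarith
  moreover have "(\<Sum>w\<in>UNIV. \<Sum>u\<in>UNIV. q w * q u * of_int (?I u w)) = (\<Sum>u\<in>UNIV. \<Sum>w\<in>UNIV. q u * of_int (?I u w) * q w)"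
    by (subst sum.swap) (simp add: mult_ac)
  ultimately have "\<not> (\<exists>v. q v \<noteq> 0)" using negdef_rat[OF nd, of q] by force
  then have "q u = 0" by blast
  then show ?thesis unfolding x_def[symmetric] q_def by (simp add: max_def split: if_splits)
qed

lemma Estar_pos:
  fixes adj :: "'v::finite \<Rightarrow> 'v \<Rightarrow> bool"
  assumes tree: "is_tree adj" and nd: "neg_definite (inter_mat adj e)"
  shows "Estar (inter_mat adj e) v u > 0"
proof -
  let ?I = "inter_mat adj e"
  define x where "x = Estar ?I v"
  have sym: "adj a b \<Longrightarrow> adj b a" and irr: "\<not> adj a a" and conn: "adj\<^sup>*\<^sup>* a b" for a b
    using tree unfolding is_tree_def by auto
  have nn: "x a \<ge> 0" for a unfolding x_def using Estar_nonneg[OF nd] .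
  have zero: "w \<noteq> v \<and> (\<forall>a. adj w a \<longrightarrow> x a = 0)" if xw: "x w = 0" for w
  proof -
    have terms: "x a * of_int (?I a w) = (if a = w then 0 else if adj a w then x a else 0)" for a
      unfolding inter_mat_def using xw by auto
    have fe: "form_E ?I x w = (\<Sum>a\<in>UNIV. (if a = w then 0 else if adj a w then x a else 0))"
      unfolding form_E_def using terms by simp
    have tnn: "\<forall>a\<in>UNIV. 0 \<le> (if a = w then 0 else if adj a w then x a else 0)" using nn by simp
    have ge: "form_E ?I x w \<ge> 0" unfolding fe by (rule sum_nonneg) (use nn in simp)
    have wv: "w \<noteq> v"
    proof
      assume "w = v"
      then have "form_E ?I x w = -1" unfolding x_def using Estar_prop[OF nd] by simp
      then show False using ge by simp
    qed
    then have "form_E ?I x w = 0" unfolding x_def using Estar_prop[OF nd] by simp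
    then have "(\<Sum>a\<in>UNIV. (if a = w then 0 else if adj a w then x a else 0)) = 0" using fe by simp
    then have all0: "\<forall>a\<in>UNIV. (if a = w then 0 else if adj a w then x a else 0) = 0"
      using sum_nonneg_eq_0_iff[of UNIV "\<lambda>a. (if a = w then 0 else if adj a w then x a else 0)"] tnn by simp
    show ?thesis
    proof (intro conjI allI impI wv)
      fix a assume "adj w a"
      then have "adj a w" "a \<noteq> w" using sym irr by auto
      then show "x a = 0" using all0[rule_format, of a] by simp
    qed
  qed
  show ?thesis
  proof (rule ccontr)
    assume "\<not> ?thesis"
    then have xu: "x u = 0" using nn[of u] unfolding x_def by simp
    have "x b = 0" if "adj\<^sup>*\<^sup>* u b" for b using that
    proof (induction rule: rtranclp_induct)
      case base then show ?case using xu .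
    next
      case (step b c) then show ?case using zero by blast
    qed
    then have "x v = 0" using conn by blast
    then show False using zero by blast
  qed
qed



context
  fixes adj :: "'v::finite \<Rightarrow> 'v \<Rightarrow> bool" and e :: "'v \<Rightarrow> int" and lam :: "'v \<Rightarrow> rat"
  assumes pos: "\<And>m n. m \<in> nodes adj \<Longrightarrow> n \<in> nodes adj \<Longrightarrow> avec adj e lam m n > 0"
begin

abbreviation "AA \<equiv> Apoly adj e lam"
abbreviation "DD n \<equiv> (\<Sum>m\<in>nodes adj. avec adj e lam m n)"
abbreviation "Dv \<equiv> (\<lambda>u. \<Sum>m\<in>nodes adj. avec adj e lam m u)"

lemma Apoly_supp: assumes "AA y \<noteq> 0" shows "\<exists>S\<subseteq>nodes adj. y = (\<lambda>u. \<Sum>m\<in>S. avec adj e lam m u)"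
proof (rule ccontr)
  assume "\<not> ?thesis"
  then have "{S. S \<subseteq> nodes adj \<and> (\<lambda>u. \<Sum>n\<in>S. avec adj e lam n u) = y} = {}" by auto
  then have "AA y = 0" unfolding Apoly_def by (simp only: sum.empty)
  then show False using assms by simp
qed

lemma Apoly_fin: "finite (gsupp AA)"
proof (rule finite_subset)
  show "gsupp AA \<subseteq> (\<lambda>S u. \<Sum>m\<in>S. avec adj e lam m u) ` Pow (nodes adj)"
    unfolding gsupp_def using Apoly_supp by blast
  show "finite ((\<lambda>S u. \<Sum>m\<in>S. avec adj e lam m u) ` Pow (nodes adj))" by simp
qed

lemma sub_le:
  assumes "S \<subseteq> nodes adj" "n \<in> nodes adj"
  shows "(\<Sum>m\<in>S. avec adj e lam m n) \<le> DD n"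
    "(\<Sum>m\<in>S. avec adj e lam m n) = DD n \<Longrightarrow> S = nodes adj"
proof -
  have fin: "finite (nodes adj)" by simp
  have split: "DD n = (\<Sum>m\<in>S. avec adj e lam m n) + (\<Sum>m\<in>nodes adj - S. avec adj e lam m n)"
    using sum.subset_diff[OF assms(1) fin] by (simp add: add.commute)
  have nn: "(\<Sum>m\<in>nodes adj - S. avec adj e lam m n) \<ge> 0"
    by (rule sum_nonneg) (use pos assms(2) in \<open>auto intro: less_imp_le\<close>)
  show "(\<Sum>m\<in>S. avec adj e lam m n) \<le> DD n" using split nn by simp
  assume eq: "(\<Sum>m\<in>S. avec adj e lam m n) = DD n"
  show "S = nodes adj"
  proof (rule ccontr)
    assume "S \<noteq> nodes adj"
    then have ne: "nodes adj - S \<noteq> {}" using assms(1) by auto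
    have "(\<Sum>m\<in>nodes adj - S. avec adj e lam m n) > 0"
      by (rule sum_pos) (use pos assms(2) ne in auto)
    then show False using split eq by simp
  qed
qed

lemma Apoly_le:
  assumes "y \<in> gsupp AA" "n \<in> nodes adj"
  shows "y n \<le> DD n" "y n = DD n \<Longrightarrow> y = Dv"
proof -
  obtain S where S: "S \<subseteq> nodes adj" "y = (\<lambda>u. \<Sum>m\<in>S. avec adj e lam m u)"
    using Apoly_supp assms(1) unfolding gsupp_def by blast
  show "y n \<le> DD n" using sub_le(1)[OF S(1) assms(2)] S(2) by simp
  assume "y n = DD n"
  then have "S = nodes adj" using sub_le(2)[OF S(1) assms(2)] S(2) by simp
  then show "y = Dv" using S(2) by simp
qed

lemma Apoly_top:
  assumes "nodes adj \<noteq> {}"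
  shows "AA Dv \<noteq> 0"
proof -
  obtain n where n: "n \<in> nodes adj" using assms by blast
  have "{S. S \<subseteq> nodes adj \<and> (\<lambda>u. \<Sum>m\<in>S. avec adj e lam m u) = Dv} = {nodes adj}"
  proof (intro equalityI subsetI)
    fix S assume "S \<in> {S. S \<subseteq> nodes adj \<and> (\<lambda>u. \<Sum>m\<in>S. avec adj e lam m u) = Dv}"
    then have S: "S \<subseteq> nodes adj" "(\<lambda>u. \<Sum>m\<in>S. avec adj e lam m u) = Dv" by auto
    then have "(\<Sum>m\<in>S. avec adj e lam m n) = DD n" by metis
    then show "S \<in> {nodes adj}" using sub_le(2)[OF S(1) n] by simp
  qed auto
  then show ?thesis unfolding Apoly_def by simp
qed

lemma Dv_supp: "nodes adj \<noteq> {} \<Longrightarrow> Dv \<in> gsupp AA"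
  using Apoly_top unfolding gsupp_def by simp

lemma gmult_diff: "gmult P F x - gmult P G x = gmult P (\<lambda>z. F z - G z) x"
  unfolding gmult_def by (simp add: sum_subtractf[symmetric] right_diff_distrib)

lemma top_contra:
  assumes ne: "nodes adj \<noteq> {}" and fin: "finite (gsupp Q)" and z0: "z0 \<in> gsupp Q" "0 \<le> z0 n"
    and n: "n \<in> nodes adj" and van: "\<And>x. DD n \<le> x n \<Longrightarrow> gmult AA Q x = 0"
  shows False
proof -
  define M where "M = Max ((\<lambda>z. z n) ` gsupp Q)"
  have Mge: "z' \<in> gsupp Q \<Longrightarrow> z' n \<le> M" for z' unfolding M_def using fin by (auto intro: Max_ge)
  have "M \<in> (\<lambda>z. z n) ` gsupp Q" unfolding M_def using fin z0(1) by (intro Max_in) auto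
  then obtain z where z: "z \<in> gsupp Q" "z n = M" by blast
  have M0: "0 \<le> M" using Mge[OF z0(1)] z0(2) by simp
  define x where "x = (\<lambda>u. Dv u + z u)"
  have xn: "DD n \<le> x n" unfolding x_def using z(2) M0 by simp
  have others: "AA y * Q (\<lambda>v. x v - y v) = 0" if y: "y \<in> gsupp AA - {Dv}" for y
  proof -
    have "y n \<le> DD n" using Apoly_le(1)[of y n] y n by simp
    moreover have "y n \<noteq> DD n" using Apoly_le(2)[of y n] y n by auto
    ultimately have "y n < DD n" by simp
    then have "(\<lambda>v. x v - y v) n > M" unfolding x_def using z(2) by simp
    then have "(\<lambda>v. x v - y v) \<notin> gsupp Q" using Mge by fastforce
    then show ?thesis unfolding gsupp_def by simp
  qed
  have xD: "(\<lambda>v. x v - Dv v) = z" unfolding x_def by simp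
  have "gmult AA Q x = AA Dv * Q (\<lambda>v. x v - Dv v) + (\<Sum>y\<in>gsupp AA - {Dv}. AA y * Q (\<lambda>v. x v - y v))"
    unfolding gmult_def by (rule sum.remove[OF Apoly_fin Dv_supp[OF ne]])
  also have "\<dots> = AA Dv * Q z"
  proof -
    have "(\<Sum>y\<in>gsupp AA - {Dv}. AA y * Q (\<lambda>v. x v - y v)) = 0"
      by (rule sum.neutral) (use others in blast)
    then show ?thesis using xD by simp
  qed
  finally have "gmult AA Q x = AA Dv * Q z" .
  moreover have "AA Dv * Q z \<noteq> 0" using Apoly_top[OF ne] z(1) unfolding gsupp_def by simp
  ultimately show False using van[of x] xn by simp
qed

definition Pr :: "(('v \<Rightarrow> rat) \<Rightarrow> int) \<Rightarrow> 'v set \<Rightarrow> ('v \<Rightarrow> rat) \<Rightarrow> int" where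
  "Pr Pp K = (\<lambda>x. if \<exists>n\<in>K. 0 \<le> x n then Pp x else 0)"

lemma Pr_apply: "Pr Pp K x = (if \<exists>n\<in>K. 0 \<le> x n then Pp x else 0)"
  unfolding Pr_def by simp

lemma negdeg_zero: "neg_deg adj e lam F n \<Longrightarrow> DD n \<le> x n \<Longrightarrow> F x = 0"
  unfolding neg_deg_def gsupp_def by force

lemma restr_exists:
  assumes Pp: "in_tN (nodes adj) Pp" and Pneg: "\<forall>n\<in>nodes adj. neg_deg adj e lam (num_minus adj e lam R Pp) n"
    and K: "K \<subseteq> nodes adj"
  shows "in_tN (nodes adj) (Pr Pp K)" "\<forall>x\<in>gsupp (Pr Pp K). \<exists>n\<in>K. 0 \<le> x n"
    "\<forall>n\<in>K. neg_deg adj e lam (num_minus adj e lam R (Pr Pp K)) n"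
proof -
  have sub: "gsupp (Pr Pp K) \<subseteq> gsupp Pp" unfolding gsupp_def Pr_def by auto
  show "in_tN (nodes adj) (Pr Pp K)" using Pp sub unfolding in_tN_def by (auto intro: finite_subset)
  show "\<forall>x\<in>gsupp (Pr Pp K). \<exists>n\<in>K. 0 \<le> x n" unfolding gsupp_def Pr_def by (auto split: if_splits)
  show "\<forall>n\<in>K. neg_deg adj e lam (num_minus adj e lam R (Pr Pp K)) n"
  proof
    fix n assume nK: "n \<in> K"
    then have nN: "n \<in> nodes adj" using K by blast
    show "neg_deg adj e lam (num_minus adj e lam R (Pr Pp K)) n" unfolding neg_deg_def
    proof
      fix x assume xs: "x \<in> gsupp (num_minus adj e lam R (Pr Pp K))"
      show "x n < DD n"
      proof (rule ccontr)
        assume "\<not> x n < DD n"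
        then have xn: "DD n \<le> x n" by simp
        have z1: "num_minus adj e lam R Pp x = 0" using negdeg_zero[where x=x, OF Pneg[rule_format, OF nN] xn] .
        have z2: "gmult AA (\<lambda>z. Pp z - Pr Pp K z) x = 0" unfolding gmult_def
        proof (rule sum.neutral, rule ballI)
          fix y assume y: "y \<in> gsupp AA"
          have "y n \<le> DD n" using Apoly_le(1)[OF y nN] .
          then have "0 \<le> x n - y n" using xn by simp
          then have "Pp (\<lambda>v. x v - y v) - Pr Pp K (\<lambda>v. x v - y v) = 0"
            unfolding Pr_def using nK by auto
          then show "AA y * (Pp (\<lambda>v. x v - y v) - Pr Pp K (\<lambda>v. x v - y v)) = 0" by simp
        qed
        have "num_minus adj e lam R (Pr Pp K) x = num_minus adj e lam R Pp x + (gmult AA Pp x - gmult AA (Pr Pp K) x)"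
          unfolding num_minus_def by simp
        also have "\<dots> = 0" using z1 z2 gmult_diff[where P=AA and F=Pp and G="Pr Pp K" and x=x] by simp
        finally show False using xs unfolding gsupp_def by simp
      qed
    qed
  qed
qed

lemma restr_unique:
  assumes ne: "nodes adj \<noteq> {}" and Pp: "in_tN (nodes adj) Pp"
    and Pneg: "\<forall>n\<in>nodes adj. neg_deg adj e lam (num_minus adj e lam R Pp) n"
    and K: "K \<subseteq> nodes adj"
    and P: "in_tN (nodes adj) P" "\<forall>x\<in>gsupp P. \<exists>n\<in>K. 0 \<le> x n"
      "\<forall>n\<in>K. neg_deg adj e lam (num_minus adj e lam R P) n"
  shows "P = Pr Pp K"
proof (rule ccontr)
  assume neq: "P \<noteq> Pr Pp K"
  note E = restr_exists[OF Pp Pneg K]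
  define Q where "Q = (\<lambda>z. P z - Pr Pp K z)"
  obtain z0 where "P z0 \<noteq> Pr Pp K z0" using neq by (auto simp: fun_eq_iff)
  then have z0: "z0 \<in> gsupp Q" unfolding Q_def gsupp_def by simp
  have subQ: "gsupp Q \<subseteq> gsupp P \<union> gsupp (Pr Pp K)" unfolding Q_def gsupp_def by auto
  have fin: "finite (gsupp Q)" using E(1) P(1) subQ unfolding in_tN_def by (auto intro: finite_subset)
  obtain n where n: "n \<in> K" "0 \<le> z0 n" using subQ z0 E(2) P(2) by blast
  have nN: "n \<in> nodes adj" using n K by blast
  show False
  proof (rule top_contra[OF ne fin z0 n(2) nN])
    fix x assume xn: "DD n \<le> x n"
    have a: "num_minus adj e lam R P x = 0" using negdeg_zero[where x=x, OF P(3)[rule_format, OF n(1)] xn] .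
    have b: "num_minus adj e lam R (Pr Pp K) x = 0" using negdeg_zero[where x=x, OF E(3)[rule_format, OF n(1)] xn] .
    have "gmult AA P x - gmult AA (Pr Pp K) x = 0" using a b unfolding num_minus_def by simp
    then show "gmult AA Q x = 0" unfolding Q_def using gmult_diff[where P=AA and F=P and G="Pr Pp K" and x=x] by simp
  qed
qed

lemma Pn_eq:
  assumes ne: "nodes adj \<noteq> {}" and Pp: "in_tN (nodes adj) Pp"
    and Pneg: "\<forall>n\<in>nodes adj. neg_deg adj e lam (num_minus adj e lam R Pp) n"
    and n: "n \<in> nodes adj"
  shows "Pn adj e lam R n = Pr Pp {n}"
proof -
  have K: "{n} \<subseteq> nodes adj" using n by simp
  note E = restr_exists[OF Pp Pneg K]
  show ?thesis unfolding Pn_def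
  proof (rule the_equality)
    show "in_tN (nodes adj) (Pr Pp {n}) \<and> (\<forall>x\<in>gsupp (Pr Pp {n}). 0 \<le> x n)
          \<and> neg_deg adj e lam (num_minus adj e lam R (Pr Pp {n})) n" using E by simp
    fix P assume "in_tN (nodes adj) P \<and> (\<forall>x\<in>gsupp P. 0 \<le> x n) \<and> neg_deg adj e lam (num_minus adj e lam R P) n"
    then show "P = Pr Pp {n}" using restr_unique[OF ne Pp Pneg K, of P] by simp
  qed
qed

lemma Pedge_eq:
  assumes ne: "nodes adj \<noteq> {}" and Pp: "in_tN (nodes adj) Pp"
    and Pneg: "\<forall>n\<in>nodes adj. neg_deg adj e lam (num_minus adj e lam R Pp) n"
    and K: "ed \<subseteq> nodes adj"
  shows "Pedge adj e lam R ed = Pr Pp ed"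
proof -
  note E = restr_exists[OF Pp Pneg K]
  show ?thesis unfolding Pedge_def
  proof (rule the_equality)
    show "in_tN (nodes adj) (Pr Pp ed) \<and> (\<forall>x\<in>gsupp (Pr Pp ed). \<exists>n\<in>ed. 0 \<le> x n)
          \<and> (\<forall>n\<in>ed. neg_deg adj e lam (num_minus adj e lam R (Pr Pp ed)) n)" using E by simp
    fix P assume "in_tN (nodes adj) P \<and> (\<forall>x\<in>gsupp P. \<exists>n\<in>ed. 0 \<le> x n) \<and> (\<forall>n\<in>ed. neg_deg adj e lam (num_minus adj e lam R P) n)"
    then show "P = Pr Pp ed" using restr_unique[OF ne Pp Pneg K, of P] by simp
  qed
qed

end

theorem mainTheorem2:
  fixes adj :: "'v::finite \<Rightarrow> 'v \<Rightarrow> bool"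
    and e :: "'v \<Rightarrow> int"
    and h0 :: "'v \<Rightarrow> rat"
    and lam :: "'v \<Rightarrow> rat"
    and n0 :: 'v
    and R Pplus :: "('v \<Rightarrow> rat) \<Rightarrow> int"
  assumes tree: "is_tree adj"
    and negdef: "neg_definite (inter_mat adj e)"
    and nodes_ne: "nodes adj \<noteq> {}"
    and h0: "in_Ldual (inter_mat adj e) h0"
    and lam_pos: "\<forall>n\<in>nodes adj. lam n > 0"
    and R_fin: "finite (gsupp R)"
    and R_num: "\<forall>x. R x = gmult (Apoly adj e lam) (Zred adj e h0) x"
    and Pplus_poly: "in_tN (nodes adj) Pplus"
    and Pplus_exps: "\<forall>\<beta>\<in>gsupp Pplus. \<not> (\<forall>n\<in>nodes adj. \<beta> n < 0)"
    and Pplus_neg: "\<forall>n\<in>nodes adj. neg_deg adj e lam (num_minus adj e lam R Pplus) n"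
    and n0: "n0 \<in> nodes adj"
  shows "\<forall>\<beta>. Ppart adj e lam R \<beta> = mult_s adj n0 \<beta> * Pplus \<beta>"
proof
  fix \<beta> :: "'v \<Rightarrow> rat"
  interpret gtree adj n0 using tree n0 by unfold_locales
  have pos: "avec adj e lam m n > 0" if "m \<in> nodes adj" "n \<in> nodes adj" for m n
  proof -
    have "Estar (inter_mat adj e) m n > 0" using Estar_pos[OF tree negdef] .
    moreover have "lam m > 0" using lam_pos that by blast
    ultimately show ?thesis unfolding avec_def proj_N_def using that by simp
  qed
  define ind where "ind = (\<lambda>x. (if 0 \<le> \<beta> x then 1 else 0 :: int))"
  have Pnv: "Pn adj e lam R n \<beta> = ind n * Pplus \<beta>" if "n \<in> nodes adj" for n
    using Pn_eq[OF pos nodes_ne Pplus_poly Pplus_neg that] unfolding ind_def by (simp add: Pr_apply[OF pos])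
  have Pev: "Pedge adj e lam R ed \<beta> = (if \<exists>n\<in>ed. 0 \<le> \<beta> n then 1 else 0) * Pplus \<beta>"
    if "ed \<in> orb_edges adj" for ed
  proof -
    have "ed \<subseteq> nodes adj" using that unfolding orb_edges_eq using Qp_node by auto
    then show ?thesis using Pedge_eq[OF pos nodes_ne Pplus_poly Pplus_neg] by (simp add: Pr_apply[OF pos])
  qed
  have "Ppart adj e lam R \<beta> = (\<Sum>ed\<in>orb_edges adj. (if \<exists>n\<in>ed. 0 \<le> \<beta> n then 1 else 0) * Pplus \<beta>)
      - (\<Sum>n\<in>nodes adj. (int (orb_valency adj n) - 1) * (ind n * Pplus \<beta>))"
    unfolding Ppart_def using Pnv Pev by simp
  also have "\<dots> = ((\<Sum>ed\<in>orb_edges adj. (if \<exists>n\<in>ed. 0 \<le> \<beta> n then 1 else 0 :: int))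
      - (\<Sum>n\<in>nodes adj. (int (orb_valency adj n) - 1) * ind n)) * Pplus \<beta>"
    by (simp add: sum_distrib_right left_diff_distrib mult.assoc)
  also have "\<dots> = mult_s adj n0 \<beta> * Pplus \<beta>"
    using count_identity[of \<beta>] unfolding ind_def by simp
  finally show "Ppart adj e lam R \<beta> = mult_s adj n0 \<beta> * Pplus \<beta>" .
qed

end
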